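(* Let $\alpha\in(0,1)$, $0\le\gamma\le 1/\alpha$, $n_0,n\in\mathbb N$ with $n_0\le n$, and $t^*\in(0,\alpha]$. Let $\xi_1,\dots,\xi_{n_0}$ be i.i.d. random variables with values in $[0,1]$ and c.d.f. $F_\xi$ satisfying $F_\xi(t)=\gamma t$ for all $t\in[0,t^*]$, and let $\xi_{n_0+1},\dots,\xi_n$ be random variables with values in $[0,1]$, independent of $(\xi_1,\dots,\xi_{n_0})$. For $c_i=i\alpha/n$ let $R'_n=\max\{k\le n:\xi_{k:n}\le c_k\}$ (with $R'_n=-\infty$ if empty) and $V'_n=|\{i\in\{1,\dots,n_0\}:\xi_i\le c_{R'_n}\}|$, where $c_{-\infty}=-\infty$. Let $F_n$ be the empirical c.d.f. of $\xi_1,\dots,\xi_n$, $A_n(t^* )=\{F_n(t)<t/\alpha \text{ for all } t\in(t^*,\alpha]\}$ and $r=\max\{i\in\mathbb N_0: i\alpha/n\le t^*\}$. Then \[ \mathbb E\Big(\frac{V'_n}{R'_n\vee 1}\mathbf 1_{A_n(t^* )}\Big)=\frac{n_0}{n}\gamma\alpha\,\mathrm P\big(D_r^{(1)}(\alpha)\big). \]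
   Context: $\xi_{1:n}\le\dots\le\xi_{n:n}$ are the order statistics of $\xi_1,\dots,\xi_n$. Let $\xi^{(1)}=(\xi_2,\dots,\xi_n)$ with order statistics $\xi^{(1)}_{1:n-1}\le\dots\le\xi^{(1)}_{n-1:n-1}$. For $1\le k<n$, $D_k^{(1)}(\alpha)=\{\xi^{(1)}_{k:n-1}>c_{k+1},\dots,\xi^{(1)}_{n-1:n-1}>c_n\}$; moreover $D_0^{(1)}(\alpha)=\varnothing$ and $D_n^{(1)}(\alpha)=\Omega$ (the whole sample space). *)

theory Defs
  imports "HOL-Probability.Probability"
begin

definition ord_stat :: "nat \<Rightarrow> (nat \<Rightarrow> real) \<Rightarrow> nat \<Rightarrow> real" where
  "ord_stat m x k = sort (map x [1..<Suc m]) ! (k - 1)"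

definition crit :: "real \<Rightarrow> nat \<Rightarrow> nat \<Rightarrow> real" where
  "crit \<alpha> n i = real i * \<alpha> / real n"

definition BH_set :: "nat \<Rightarrow> real \<Rightarrow> (nat \<Rightarrow> real) \<Rightarrow> nat set" where
  "BH_set n \<alpha> x = {k \<in> {1..n}. ord_stat n x k \<le> crit \<alpha> n k}"

text \<open>R'_n; the value 0 encodes R'_n = -infinity (empty set).\<close>
definition BH_R :: "nat \<Rightarrow> real \<Rightarrow> (nat \<Rightarrow> real) \<Rightarrow> nat" where
  "BH_R n \<alpha> x = (if BH_set n \<alpha> x = {} then 0 else Max (BH_set n \<alpha> x))"

text \<open>V'_n; if R'_n = -infinity then c_{R'_n} = -infinity and V'_n = 0.\<close>
definition BH_V :: "nat \<Rightarrow> nat \<Rightarrow> real \<Rightarrow> (nat \<Rightarrow> real) \<Rightarrow> nat" where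
  "BH_V n0 n \<alpha> x = (if BH_set n \<alpha> x = {} then 0
      else card {i \<in> {1..n0}. x i \<le> crit \<alpha> n (BH_R n \<alpha> x)})"

definition emp_cdf :: "nat \<Rightarrow> (nat \<Rightarrow> real) \<Rightarrow> real \<Rightarrow> real" where
  "emp_cdf n x t = real (card {i \<in> {1..n}. x i \<le> t}) / real n"

definition A_event :: "nat \<Rightarrow> real \<Rightarrow> real \<Rightarrow> (nat \<Rightarrow> real) \<Rightarrow> bool" where
  "A_event n \<alpha> tstar x = (\<forall>t \<in> {tstar<..\<alpha>}. emp_cdf n x t < t / \<alpha>)"

definition D1 :: "nat \<Rightarrow> real \<Rightarrow> nat \<Rightarrow> (nat \<Rightarrow> real) \<Rightarrow> bool" where
  "D1 n \<alpha> k x = (if k = 0 then False else if n \<le> k then True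
      else (\<forall>j \<in> {k..n-1}. ord_stat (n - 1) (\<lambda>i. x (i + 1)) j > crit \<alpha> n (j + 1)))"

end

theory Submission
  imports Defs
begin


lemma sorted_nth_le_iff:
  fixes s :: "real list"
  assumes "sorted s" "j < length s"
  shows "s ! j \<le> t \<longleftrightarrow> j < length (filter (\<lambda>v. v \<le> t) s)"
proof
  assume h: "s ! j \<le> t"
  have "{0..j} \<subseteq> {i. i < length s \<and> s ! i \<le> t}"
    using assms h by (auto intro: order_trans[OF sorted_nth_mono[OF assms(1)]])
  hence "card {0..j} \<le> card {i. i < length s \<and> s ! i \<le> t}"
    by (intro card_mono) auto
  thus "j < length (filter (\<lambda>v. v \<le> t) s)"
    by (simp add: length_filter_conv_card)
next
  assume h: "j < length (filter (\<lambda>v. v \<le> t) s)"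
  show "s ! j \<le> t"
  proof (rule ccontr)
    assume "\<not> s ! j \<le> t"
    hence "{i. i < length s \<and> s ! i \<le> t} \<subseteq> {0..<j}"
      using assms by (auto simp: not_le) (metis leI le_less_trans less_le_not_le sorted_nth_mono)
    hence "card {i. i < length s \<and> s ! i \<le> t} \<le> j"
      using card_mono[of "{0..<j}"] by fastforce
    thus False using h by (simp add: length_filter_conv_card)
  qed
qed

lemma ord_stat_le_iff:
  assumes "1 \<le> k" "k \<le> m"
  shows "ord_stat m x k \<le> t \<longleftrightarrow> k \<le> card {j\<in>{1..m}. x j \<le> t}"
proof -
  let ?s = "sort (map x [1..<Suc m])"
  have len: "length ?s = m" by simp
  have "ord_stat m x k \<le> t \<longleftrightarrow> k - 1 < length (filter (\<lambda>v. v \<le> t) ?s)"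
    unfolding ord_stat_def using assms by (intro sorted_nth_le_iff) auto
  also have "length (filter (\<lambda>v. v \<le> t) ?s) = length (filter (\<lambda>v. v \<le> t) (map x [1..<Suc m]))"
    by (metis mset_filter mset_sort size_mset)
  also have "\<dots> = length (filter (\<lambda>j. x j \<le> t) [1..<Suc m])"
    by (simp add: filter_map comp_def)
  also have "\<dots> = card {j\<in>{1..m}. x j \<le> t}"
    by (subst distinct_length_filter) (auto intro!: arg_cong[where f=card])
  finally show ?thesis using assms by auto
qed


definition sw :: "nat \<Rightarrow> nat \<Rightarrow> nat" where
  "sw i j = (if j = 1 then i else if j = i then 1 else j)"

lemma sw_sw[simp]: "sw i (sw i j) = j" by (auto simp: sw_def)

lemma inj_sw: "inj_on (sw i) A" by (metis inj_on_inverseI sw_sw)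

lemma card_shift: "card {i\<in>{1..n-1}. x (i+1) \<le> c} = card {l\<in>{2..(n::nat)}. (x l::real) \<le> c}"
proof -
  have "{l\<in>{2..n}. x l \<le> c} = Suc ` {i\<in>{1..n-1}. x (i+1) \<le> c}"
  proof (intro set_eqI iffI)
    fix l assume "l \<in> {l\<in>{2..n}. x l \<le> c}"
    then show "l \<in> Suc ` {i\<in>{1..n-1}. x (i+1) \<le> c}"
      by (intro image_eqI[of _ _ "l - 1"]) auto
  next
    fix l assume "l \<in> Suc ` {i\<in>{1..n-1}. x (i+1) \<le> c}"
    then obtain i where "i \<in> {1..n-1}" "x (i+1) \<le> c" "l = Suc i" by blast
    then show "l \<in> {l\<in>{2..n}. x l \<le> c}" by auto
  qed
  thus ?thesis by (simp add: card_image)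
qed

lemma D1_iff:
  assumes "0 < k" "k < n"
  shows "D1 n \<alpha> k x \<longleftrightarrow> (\<forall>j\<in>{k..n-1}. card {l\<in>{2..n}. x l \<le> crit \<alpha> n (j+1)} < j)"
proof -
  have H: "(ord_stat (n - 1) (\<lambda>i. x (i + 1)) j > crit \<alpha> n (j + 1)
     \<longleftrightarrow> card {l\<in>{2..n}. x l \<le> crit \<alpha> n (j+1)} < j)" if j: "j \<in> {k..n-1}" for j
  proof -
    have "ord_stat (n - 1) (\<lambda>i. x (i + 1)) j > crit \<alpha> n (j + 1) \<longleftrightarrow>
      \<not> ord_stat (n - 1) (\<lambda>i. x (i + 1)) j \<le> crit \<alpha> n (j + 1)" by linarith
    also have "\<dots> \<longleftrightarrow> \<not> j \<le> card {i\<in>{1..n-1}. x (i+1) \<le> crit \<alpha> n (j+1)}"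
      using j assms by (subst ord_stat_le_iff) auto
    finally show ?thesis unfolding card_shift not_le .
  qed
  have "D1 n \<alpha> k x \<longleftrightarrow> (\<forall>j\<in>{k..n-1}. ord_stat (n - 1) (\<lambda>i. x (i + 1)) j > crit \<alpha> n (j + 1))"
    using assms by (simp add: D1_def)
  also have "\<dots> \<longleftrightarrow> (\<forall>j\<in>{k..n-1}. card {l\<in>{2..n}. x l \<le> crit \<alpha> n (j+1)} < j)"
    using H by (intro ball_cong) auto
  finally show ?thesis .
qed

lemma cnt_sw:
  assumes "i \<in> {1..n}"
  shows "card {l\<in>{2..n}. x (sw i l) \<le> t} = card {j\<in>{1..n}. (x j::real) \<le> t} - (if x i \<le> t then 1 else 0)"
proof -
  have e: "sw i ` {l\<in>{2..n}. x (sw i l) \<le> t} = {j\<in>{1..n}. x j \<le> t} - {i}"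
  proof (intro set_eqI iffI)
    fix j assume "j \<in> sw i ` {l\<in>{2..n}. x (sw i l) \<le> t}"
    then obtain l where l: "l \<in> {2..n}" "x (sw i l) \<le> t" "j = sw i l" by blast
    then show "j \<in> {j\<in>{1..n}. x j \<le> t} - {i}" using assms by (auto simp: sw_def)
  next
    fix j assume j: "j \<in> {j\<in>{1..n}. x j \<le> t} - {i}"
    show "j \<in> sw i ` {l\<in>{2..n}. x (sw i l) \<le> t}"
    proof (rule image_eqI[of _ _ "sw i j"])
      show "sw i j \<in> {l\<in>{2..n}. x (sw i l) \<le> t}" using j assms by (auto simp: sw_def)
    qed simp
  qed
  have "card {l\<in>{2..n}. x (sw i l) \<le> t} = card (sw i ` {l\<in>{2..n}. x (sw i l) \<le> t})"
    by (rule card_image[symmetric]) (rule inj_sw)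
  also have "\<dots> = card ({j\<in>{1..n}. x j \<le> t} - {i})" by (rule arg_cong[OF e])
  finally show ?thesis using assms by (auto simp: card_Diff_singleton_if)
qed


lemma crit_mono: "0 < \<alpha> \<Longrightarrow> k \<le> j \<Longrightarrow> crit \<alpha> n k \<le> crit \<alpha> n j"
  unfolding crit_def by (intro divide_right_mono mult_right_mono) auto

lemma BH_mem: "k \<in> BH_set n \<alpha> x \<longleftrightarrow> k \<in> {1..n} \<and> k \<le> card {j\<in>{1..n}. x j \<le> crit \<alpha> n k}"
  unfolding BH_set_def using ord_stat_le_iff[of k n x] by auto

lemma cnt_pos:
  assumes "i \<in> {1..(n::nat)}" "x i \<le> t"
  shows "1 \<le> card {j\<in>{1..n}. (x j::real) \<le> t}"
proof -
  have "{i} \<subseteq> {j\<in>{1..n}. x j \<le> t}" using assms by auto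
  have "finite {j\<in>{1..n}. x j \<le> t}" by (rule finite_subset[of _ "{1..n}"]) auto
  from card_mono[OF this \<open>{i} \<subseteq> _\<close>] show ?thesis by simp
qed

lemma D1_sw:
  assumes i: "i \<in> {1..n}" and m: "0 < m" "m \<le> n" and xi: "x i \<le> crit \<alpha> n (m+1)" and a: "0 < \<alpha>"
  shows "D1 n \<alpha> m (\<lambda>j. x (sw i j)) \<longleftrightarrow> (\<forall>j\<in>{m+1..n}. card {l\<in>{1..n}. x l \<le> crit \<alpha> n j} < j)"
proof (cases "m = n")
  case True thus ?thesis using m by (simp add: D1_def)
next
  case False
  hence mn: "m < n" using m by simp
  have "D1 n \<alpha> m (\<lambda>j. x (sw i j)) \<longleftrightarrow>
     (\<forall>j\<in>{m..n-1}. card {l\<in>{2..n}. x (sw i l) \<le> crit \<alpha> n (j+1)} < j)"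
    using D1_iff[OF m(1) mn] by simp
  also have "\<dots> \<longleftrightarrow> (\<forall>j\<in>{m..n-1}. card {l\<in>{1..n}. x l \<le> crit \<alpha> n (j+1)} < j + 1)"
  proof (intro ball_cong refl)
    fix j assume j: "j \<in> {m..n-1}"
    have le: "x i \<le> crit \<alpha> n (j+1)" using xi crit_mono[OF a, of "m+1" "j+1" n] j by auto
    have p: "1 \<le> card {l\<in>{1..n}. x l \<le> crit \<alpha> n (j+1)}" by (rule cnt_pos[of i n x, OF i le])
    show "(card {l\<in>{2..n}. x (sw i l) \<le> crit \<alpha> n (j+1)} < j) =
          (card {l\<in>{1..n}. x l \<le> crit \<alpha> n (j+1)} < j + 1)"
      using cnt_sw[OF i, of x "crit \<alpha> n (j+1)"] le p by auto
  qed
  also have "\<dots> \<longleftrightarrow> (\<forall>j\<in>{m+1..n}. card {l\<in>{1..n}. x l \<le> crit \<alpha> n j} < j)"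
  proof
    assume h: "\<forall>j\<in>{m..n-1}. card {l\<in>{1..n}. x l \<le> crit \<alpha> n (j+1)} < j + 1"
    show "\<forall>j\<in>{m+1..n}. card {l\<in>{1..n}. x l \<le> crit \<alpha> n j} < j"
    proof
      fix j assume "j \<in> {m+1..n}"
      hence "j - 1 \<in> {m..n-1}" "j - 1 + 1 = j" by auto
      with h show "card {l\<in>{1..n}. x l \<le> crit \<alpha> n j} < j" by metis
    qed
  next
    assume h: "\<forall>j\<in>{m+1..n}. card {l\<in>{1..n}. x l \<le> crit \<alpha> n j} < j"
    show "\<forall>j\<in>{m..n-1}. card {l\<in>{1..n}. x l \<le> crit \<alpha> n (j+1)} < j + 1"
    proof
      fix j assume "j \<in> {m..n-1}"
      hence "j + 1 \<in> {m+1..n}" using mn by auto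
      with h show "card {l\<in>{1..n}. x l \<le> crit \<alpha> n (j+1)} < j + 1" by blast
    qed
  qed
  finally show ?thesis .
qed

lemma KEY:
  assumes i: "i \<in> {1..n}" and k: "1 \<le> k" "k \<le> n" and xi: "x i \<le> crit \<alpha> n k" and a: "0 < \<alpha>"
  shows "(D1 n \<alpha> k (\<lambda>j. x (sw i j)) \<and> \<not> D1 n \<alpha> (k-1) (\<lambda>j. x (sw i j)))
     \<longleftrightarrow> (k \<in> BH_set n \<alpha> x \<and> (\<forall>j\<in>{k+1..n}. j \<notin> BH_set n \<alpha> x))"
proof -
  let ?N = "\<lambda>j. card {l\<in>{1..n}. x l \<le> crit \<alpha> n j}"
  have xi1: "x i \<le> crit \<alpha> n (k+1)" using xi crit_mono[OF a, of k "k+1" n] by auto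
  have A: "D1 n \<alpha> k (\<lambda>j. x (sw i j)) \<longleftrightarrow> (\<forall>j\<in>{k+1..n}. ?N j < j)"
    using D1_sw[of i n k x \<alpha>] i k xi1 a by auto
  have B: "\<not> D1 n \<alpha> (k-1) (\<lambda>j. x (sw i j)) \<longleftrightarrow> \<not> (?N k < k \<and> (\<forall>j\<in>{k+1..n}. ?N j < j))"
  proof (cases "k = 1")
    case True
    have "x i \<le> crit \<alpha> n 1" using xi True by simp
    from cnt_pos[of i n x, OF i this] have "1 \<le> ?N 1" .
    hence "\<not> ?N k < k" using True by (simp only: not_less)
    moreover have "\<not> D1 n \<alpha> (k-1) (\<lambda>j. x (sw i j))" using True by (simp add: D1_def)
    ultimately show ?thesis by blast
  next
    case False
    hence "0 < k - 1" "k - 1 \<le> n" "k - 1 + 1 = k" using k by auto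
    hence "D1 n \<alpha> (k-1) (\<lambda>j. x (sw i j)) \<longleftrightarrow> (\<forall>j\<in>{k..n}. ?N j < j)"
      using D1_sw[OF i, of "k-1" x \<alpha>] xi a by simp
    also have "\<dots> \<longleftrightarrow> ?N k < k \<and> (\<forall>j\<in>{k+1..n}. ?N j < j)"
      using k by (auto simp: Ball_def) (metis Suc_leI le_neq_implies_less)
    finally show ?thesis by simp
  qed
  have C: "(\<forall>j\<in>{k+1..n}. ?N j < j) \<longleftrightarrow> (\<forall>j\<in>{k+1..n}. j \<notin> BH_set n \<alpha> x)"
    by (auto simp: BH_mem not_le)
  have D: "k \<in> BH_set n \<alpha> x \<longleftrightarrow> k \<le> ?N k" using k by (auto simp: BH_mem)
  show ?thesis using A B C D by auto
qed


lemma cnt_le_n: "card {j\<in>{1..(n::nat)}. (x j::real) \<le> t} \<le> n"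
proof -
  have "{j\<in>{1..n}. x j \<le> t} \<subseteq> {1..n}" by auto
  from card_mono[OF finite_atLeastAtMost this] show ?thesis by simp
qed

lemma cnt_mono: "s \<le> t \<Longrightarrow> card {j\<in>{1..(n::nat)}. (x j::real) \<le> s} \<le> card {j\<in>{1..n}. x j \<le> t}"
  by (intro card_mono) auto

lemma A_of:
  assumes i: "i \<in> {1..n}" and k: "1 \<le> k" "k \<le> r" and xi: "x i \<le> crit \<alpha> n k"
    and nb: "\<forall>j\<in>{k+1..n}. j \<notin> BH_set n \<alpha> x"
    and r: "crit \<alpha> n r \<le> tstar" and a: "0 < \<alpha>" and n: "0 < n"
  shows "A_event n \<alpha> tstar x"
  unfolding A_event_def emp_cdf_def
proof
  fix t assume t: "t \<in> {tstar<..\<alpha>}"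
  let ?m = "card {j\<in>{1..n}. x j \<le> t}"
  show "real ?m / real n < t / \<alpha>"
  proof (rule ccontr)
    assume "\<not> real ?m / real n < t / \<alpha>"
    hence h: "t * real n \<le> real ?m * \<alpha>" using a n by (simp add: field_simps not_less)
    have "real r * \<alpha> \<le> tstar * real n" using r a n by (simp add: crit_def field_simps)
    also have "\<dots> < t * real n" using t n by simp
    finally have "real r * \<alpha> < real ?m * \<alpha>" using h by linarith
    hence "r < ?m" using a by simp
    hence m1: "?m \<in> {k+1..n}" using k cnt_le_n[of n x t] by auto
    have "t \<le> crit \<alpha> n ?m" using h n by (simp add: crit_def field_simps)
    hence "?m \<le> card {j\<in>{1..n}. x j \<le> crit \<alpha> n ?m}" by (rule cnt_mono)
    hence "?m \<in> BH_set n \<alpha> x" using m1 k by (auto simp: BH_mem)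
    thus False using nb m1 by blast
  qed
qed

lemma A_bound:
  assumes A: "A_event n \<alpha> tstar x" and kb: "k \<in> BH_set n \<alpha> x"
    and rk: "\<And>k. r < k \<Longrightarrow> tstar < crit \<alpha> n k" and a: "0 < \<alpha>" and n: "0 < n"
  shows "k \<le> r"
proof (rule ccontr)
  assume "\<not> k \<le> r"
  hence c1: "tstar < crit \<alpha> n k" using rk by simp
  have kn: "k \<in> {1..n}" "k \<le> card {j\<in>{1..n}. x j \<le> crit \<alpha> n k}" using kb by (auto simp: BH_mem)
  have "crit \<alpha> n k \<le> \<alpha>" using kn n a by (simp add: crit_def field_simps)
  with A c1 have "real (card {j\<in>{1..n}. x j \<le> crit \<alpha> n k}) / real n < crit \<alpha> n k / \<alpha>"
    unfolding A_event_def emp_cdf_def by auto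
  also have "crit \<alpha> n k / \<alpha> = real k / real n" using a by (simp add: crit_def)
  finally have "real (card {j\<in>{1..n}. x j \<le> crit \<alpha> n k}) < real k" using n by (simp add: divide_less_cancel)
  hence "card {j\<in>{1..n}. x j \<le> crit \<alpha> n k} < k" by simp
  thus False using kn by simp
qed

definition Ev :: "nat \<Rightarrow> real \<Rightarrow> nat \<Rightarrow> (nat \<Rightarrow> real) \<Rightarrow> bool" where
  "Ev n \<alpha> k y = (D1 n \<alpha> k y \<and> \<not> D1 n \<alpha> (k-1) y)"


lemma Ev_iff_R:
  assumes ne: "BH_set n \<alpha> x \<noteq> {}" and i: "i \<in> {1..n}" and k: "k \<in> {1..n}"
    and xi: "x i \<le> crit \<alpha> n k" and a: "0 < \<alpha>"
  shows "Ev n \<alpha> k (\<lambda>j. x (sw i j)) \<longleftrightarrow> k = Max (BH_set n \<alpha> x)"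
proof -
  let ?B = "BH_set n \<alpha> x"
  have fin: "finite ?B" unfolding BH_set_def by simp
  have R: "Max ?B \<in> ?B" by (rule Max_in[OF fin ne])
  have K: "Ev n \<alpha> k (\<lambda>j. x (sw i j)) \<longleftrightarrow> (k \<in> ?B \<and> (\<forall>j\<in>{k+1..n}. j \<notin> ?B))"
    unfolding Ev_def using KEY[of i n k x \<alpha>] i k xi a by simp
  have "(k \<in> ?B \<and> (\<forall>j\<in>{k+1..n}. j \<notin> ?B)) \<longleftrightarrow> k = Max ?B"
  proof
    assume h: "k \<in> ?B \<and> (\<forall>j\<in>{k+1..n}. j \<notin> ?B)"
    have "k \<le> Max ?B" using Max_ge[OF fin] h by blast
    moreover have "Max ?B \<in> {1..n}" using R by (simp add: BH_mem)
    ultimately have "\<not> k < Max ?B \<Longrightarrow> k = Max ?B" by simp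
    moreover have "k < Max ?B \<Longrightarrow> False"
    proof -
      assume "k < Max ?B"
      hence "Max ?B \<in> {k+1..n}" using \<open>Max ?B \<in> {1..n}\<close> by simp
      thus False using h R by blast
    qed
    ultimately show "k = Max ?B" by blast
  next
    assume h: "k = Max ?B"
    have "\<forall>j\<in>{k+1..n}. j \<notin> ?B"
    proof (intro ballI notI)
      fix j assume j: "j \<in> {k+1..n}" "j \<in> ?B"
      have "j \<le> Max ?B" by (rule Max_ge[OF fin j(2)])
      thus False using j(1) h by simp
    qed
    thus "k \<in> ?B \<and> (\<forall>j\<in>{k+1..n}. j \<notin> ?B)" using h R by simp
  qed
  with K show ?thesis by simp
qed

lemma inner_sum:
  assumes ne: "BH_set n \<alpha> x \<noteq> {}" and i: "i \<in> {1..n}" and rn: "r \<le> n" and a: "0 < \<alpha>"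
  shows "(\<Sum>k\<in>{1..r}. 1 / real k *
         (if x i \<le> crit \<alpha> n k \<and> Ev n \<alpha> k (\<lambda>j. x (sw i j)) then 1 else 0))
     = (if Max (BH_set n \<alpha> x) \<in> {1..r} then
          1 / real (Max (BH_set n \<alpha> x)) * (if x i \<le> crit \<alpha> n (Max (BH_set n \<alpha> x)) then 1 else 0) else 0)"
proof -
  let ?R = "Max (BH_set n \<alpha> x)"
  have "(\<Sum>k\<in>{1..r}. 1 / real k *
         (if x i \<le> crit \<alpha> n k \<and> Ev n \<alpha> k (\<lambda>j. x (sw i j)) then 1 else 0))
     = (\<Sum>k\<in>{1..r}. if k = ?R then 1 / real ?R * (if x i \<le> crit \<alpha> n ?R then 1 else 0) else 0)"
  proof (rule sum.cong[OF refl])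
    fix k assume k: "k \<in> {1..r}"
    hence kn: "k \<in> {1..n}" using rn by simp
    show "1 / real k * (if x i \<le> crit \<alpha> n k \<and> Ev n \<alpha> k (\<lambda>j. x (sw i j)) then 1 else 0)
       = (if k = ?R then 1 / real ?R * (if x i \<le> crit \<alpha> n ?R then 1 else 0) else 0)"
    proof (cases "x i \<le> crit \<alpha> n k")
      case True
      have "Ev n \<alpha> k (\<lambda>j. x (sw i j)) \<longleftrightarrow> k = ?R" by (rule Ev_iff_R[OF ne i kn True a])
      thus ?thesis using True by auto
    next
      case False
      thus ?thesis by auto
    qed
  qed
  also have "\<dots> = (if ?R \<in> {1..r} then 1 / real ?R * (if x i \<le> crit \<alpha> n ?R then 1 else 0) else 0)"
    by (rule sum.delta[OF finite_atLeastAtMost])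
  finally show ?thesis .
qed

lemma card_sum_if: "real (card {i\<in>{1..n0::nat}. (x i::real) \<le> c}) = (\<Sum>i\<in>{1..n0}. if x i \<le> c then 1 else 0)"
proof -
  have "{1..n0} \<inter> {i. x i \<le> c} = {i\<in>{1..n0}. x i \<le> c}" by blast
  thus ?thesis by (simp only: sum.If_cases[OF finite_atLeastAtMost] sum.neutral_const add_0_right real_of_card mult_1)
qed

lemma pointwise:
  assumes a: "0 < \<alpha>" and n: "0 < n" and n0: "n0 \<le> n" and rn: "r \<le> n"
    and r: "crit \<alpha> n r \<le> tstar" and rk: "\<And>k. r < k \<Longrightarrow> tstar < crit \<alpha> n k"
  shows "real (BH_V n0 n \<alpha> x) / real (max (BH_R n \<alpha> x) 1) * (if A_event n \<alpha> tstar x then 1 else 0)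
    = (\<Sum>i\<in>{1..n0}. \<Sum>k\<in>{1..r}. 1 / real k *
         (if x i \<le> crit \<alpha> n k \<and> Ev n \<alpha> k (\<lambda>j. x (sw i j)) then 1 else 0))"
proof (cases "BH_set n \<alpha> x = {}")
  case True
  have z: "(\<Sum>k\<in>{1..r}. 1 / real k *
         (if x i \<le> crit \<alpha> n k \<and> Ev n \<alpha> k (\<lambda>j. x (sw i j)) then 1 else 0)) = 0"
    if i: "i \<in> {1..n0}" for i
  proof (rule sum.neutral, rule ballI)
    fix k assume k: "k \<in> {1..r}"
    have "\<not> (x i \<le> crit \<alpha> n k \<and> Ev n \<alpha> k (\<lambda>j. x (sw i j)))"
    proof
      assume h: "x i \<le> crit \<alpha> n k \<and> Ev n \<alpha> k (\<lambda>j. x (sw i j))"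
      have i': "i \<in> {1..n}" using i n0 by simp
      have k1: "1 \<le> k" "k \<le> n" using k rn by auto
      have "k \<in> BH_set n \<alpha> x"
        using KEY[OF i' k1 _ a] h unfolding Ev_def by blast
      thus False using True by simp
    qed
    hence "(if x i \<le> crit \<alpha> n k \<and> Ev n \<alpha> k (\<lambda>j. x (sw i j)) then 1 else 0) = (0::real)"
      by (rule if_not_P)
    thus "1 / real k * (if x i \<le> crit \<alpha> n k \<and> Ev n \<alpha> k (\<lambda>j. x (sw i j)) then 1 else 0) = 0"
      by (simp only: mult_zero_right)
  qed
  have "real (BH_V n0 n \<alpha> x) = 0" using True by (simp add: BH_V_def)
  hence "real (BH_V n0 n \<alpha> x) / real (max (BH_R n \<alpha> x) 1) * (if A_event n \<alpha> tstar x then 1 else 0) = 0"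
    by simp
  also have "0 = (\<Sum>i\<in>{1..n0}. \<Sum>k\<in>{1..r}. 1 / real k *
         (if x i \<le> crit \<alpha> n k \<and> Ev n \<alpha> k (\<lambda>j. x (sw i j)) then 1 else 0))"
    using z by simp
  finally show ?thesis .
next
  case False
  let ?B = "BH_set n \<alpha> x"
  define R where "R = Max ?B"
  have fin: "finite ?B" unfolding BH_set_def by simp
  have R: "R \<in> ?B" unfolding R_def by (rule Max_in[OF fin False])
  have R1: "R \<in> {1..n}" using R by (simp add: BH_mem)
  have nb: "\<forall>j\<in>{R+1..n}. j \<notin> ?B"
  proof (intro ballI notI)
    fix j assume j: "j \<in> {R+1..n}" "j \<in> ?B"
    have "j \<le> R" unfolding R_def by (rule Max_ge[OF fin j(2)])
    thus False using j(1) by simp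
  qed
  have BR: "BH_R n \<alpha> x = R" unfolding BH_R_def R_def using False by simp
  have V: "BH_V n0 n \<alpha> x = card {i\<in>{1..n0}. x i \<le> crit \<alpha> n R}"
    unfolding BH_V_def BR using False by simp
  have Vs: "real (card {i\<in>{1..n0}. x i \<le> crit \<alpha> n R}) = (\<Sum>i\<in>{1..n0}. if x i \<le> crit \<alpha> n R then 1 else 0)"
    by (rule card_sum_if)
  have inner: "(\<Sum>k\<in>{1..r}. 1 / real k *
         (if x i \<le> crit \<alpha> n k \<and> Ev n \<alpha> k (\<lambda>j. x (sw i j)) then 1 else 0))
       = (if x i \<le> crit \<alpha> n R then 1 / real R else 0) * (if A_event n \<alpha> tstar x then 1 else 0)"
    if i: "i \<in> {1..n0}" for i
  proof -
    have i': "i \<in> {1..n}" using i n0 by simp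
    have "(\<Sum>k\<in>{1..r}. 1 / real k *
         (if x i \<le> crit \<alpha> n k \<and> Ev n \<alpha> k (\<lambda>j. x (sw i j)) then 1 else 0))
       = (if R \<in> {1..r} then 1 / real R * (if x i \<le> crit \<alpha> n R then 1 else 0) else 0)"
      unfolding R_def by (rule inner_sum[OF False i' rn a])
    also have "\<dots> = (if x i \<le> crit \<alpha> n R then 1 / real R else 0) * (if A_event n \<alpha> tstar x then 1 else 0)"
    proof (cases "R \<le> r")
      case True
      hence Rr: "R \<in> {1..r}" using R1 by simp
      show ?thesis
      proof (cases "x i \<le> crit \<alpha> n R")
        case True
        have "A_event n \<alpha> tstar x"
        proof (rule A_of[OF i' _ _ True nb r a n])
          show "1 \<le> R" using R1 by simp
          show "R \<le> r" by fact
        qed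
        thus ?thesis using True Rr by simp
      next
        case False
        thus ?thesis using Rr by simp
      qed
    next
      case False
      hence "\<not> A_event n \<alpha> tstar x" using A_bound[OF _ R rk a n] by blast
      thus ?thesis using False by simp
    qed
    finally show ?thesis .
  qed
  have m: "max R 1 = R" using R1 by simp
  have "real (BH_V n0 n \<alpha> x) / real (max (BH_R n \<alpha> x) 1) * (if A_event n \<alpha> tstar x then 1 else 0)
      = (\<Sum>i\<in>{1..n0}. if x i \<le> crit \<alpha> n R then 1 else 0) / real R * (if A_event n \<alpha> tstar x then 1 else 0)"
    unfolding V BR m Vs ..
  also have "\<dots> = (\<Sum>i\<in>{1..n0}. (if x i \<le> crit \<alpha> n R then 1 else 0) / real R * (if A_event n \<alpha> tstar x then 1 else 0))"
    unfolding sum_divide_distrib sum_distrib_right ..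
  also have "\<dots> = (\<Sum>i\<in>{1..n0}. (if x i \<le> crit \<alpha> n R then 1 / real R else 0) * (if A_event n \<alpha> tstar x then 1 else 0))"
    by (intro sum.cong refl) simp
  also have "\<dots> = (\<Sum>i\<in>{1..n0}. \<Sum>k\<in>{1..r}. 1 / real k *
         (if x i \<le> crit \<alpha> n k \<and> Ev n \<alpha> k (\<lambda>j. x (sw i j)) then 1 else 0))"
    by (rule sum.cong[OF refl inner[symmetric]])
  finally show ?thesis .
qed


lemma finite_measure_eq_PiM:
  assumes "finite I" "finite_measure P" "finite_measure Q"
    "sets P = sets (PiM I M)" "sets Q = sets (PiM I M)"
    "\<And>A. (\<And>i. i \<in> I \<Longrightarrow> A i \<in> sets (M i)) \<Longrightarrow> measure P (Pi\<^sub>E I A) = measure Q (Pi\<^sub>E I A)"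
  shows "P = Q"
proof (rule measure_eqI_PiM_finite[OF assms(1,4,5)])
  fix A assume A: "\<And>i. i \<in> I \<Longrightarrow> A i \<in> sets (M i)"
  show "emeasure P (Pi\<^sub>E I A) = emeasure Q (Pi\<^sub>E I A)"
    using assms(6)[OF A] finite_measure.emeasure_eq_measure[OF assms(2)]
      finite_measure.emeasure_eq_measure[OF assms(3)] by simp
next
  show "range (\<lambda>_::nat. \<Pi>\<^sub>E i\<in>I. space (M i)) \<subseteq> prod_algebra I M"
    using space_in_prod_algebra by auto
  show "(\<Union>i::nat. \<Pi>\<^sub>E i\<in>I. space (M i)) = space (PiM I M)" by (simp add: space_PiM)
  show "emeasure P (\<Pi>\<^sub>E i\<in>I. space (M i)) \<noteq> \<infinity>" for i::nat
    using finite_measure.emeasure_finite[OF assms(2)] by simp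
qed

lemma prob_times:
  assumes "prob_space N" "prob_space K" "A \<in> sets N" "B \<in> sets K"
  shows "measure (N \<Otimes>\<^sub>M K) (A \<times> B) = measure N A * measure K B"
proof -
  interpret N: prob_space N by fact
  interpret K: prob_space K by fact
  interpret pair_prob_space N K ..
  have e: "emeasure (N \<Otimes>\<^sub>M K) (A \<times> B) = emeasure N A * emeasure K B"
    by (rule K.emeasure_pair_measure_Times[OF assms(3,4)])
  have "measure (N \<Otimes>\<^sub>M K) (A \<times> B) = enn2real (emeasure N A * emeasure K B)"
    unfolding measure_def e ..
  also have "\<dots> = enn2real (emeasure N A) * enn2real (emeasure K B)" by (rule enn2real_mult)
  also have "\<dots> = measure N A * measure K B" unfolding measure_def ..
  finally show ?thesis .
qed


lemma card_sum_if_gen: "finite S \<Longrightarrow> real (card {i\<in>S. P i}) = (\<Sum>i\<in>S. if P i then 1 else 0)"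
proof -
  assume f: "finite S"
  have "S \<inter> {i. P i} = {i\<in>S. P i}" by blast
  thus ?thesis by (simp only: sum.If_cases[OF f] sum.neutral_const add_0_right real_of_card mult_1)
qed

lemma cnt_meas:
  fixes c :: real
  assumes "finite S" "S \<subseteq> I"
  shows "(\<lambda>x::nat\<Rightarrow>real. real (card {l\<in>S. x l \<le> c})) \<in> borel_measurable (PiM I (\<lambda>_. borel))"
proof -
  have "(\<lambda>x::nat\<Rightarrow>real. real (card {l\<in>S. x l \<le> c})) = (\<lambda>x. \<Sum>l\<in>S. if (x l::real) \<le> c then 1 else 0)"
    using card_sum_if_gen[OF assms(1)] by auto
  also have "\<dots> \<in> borel_measurable (PiM I (\<lambda>_. borel))"
  proof (intro borel_measurable_sum)
    fix l assume "l \<in> S" hence "l \<in> I" using assms by auto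
    thus "(\<lambda>x::nat\<Rightarrow>real. if x l \<le> c then 1 else 0 :: real) \<in> borel_measurable (PiM I (\<lambda>_. borel))"
      by measurable
  qed
  finally show ?thesis .
qed

lemma D1_dep:
  assumes "\<forall>j\<in>{2..n}. x j = y j"
  shows "D1 n \<alpha> k x = D1 n \<alpha> k y"
proof (cases "0 < k \<and> k < n")
  case True
  have "\<And>c. {l\<in>{2..n}. x l \<le> c} = {l\<in>{2..n}. y l \<le> c}" using assms by auto
  thus ?thesis using True by (simp add: D1_iff)
next
  case False
  hence "k = 0 \<or> n \<le> k" by linarith
  thus ?thesis unfolding D1_def by (elim disjE) simp_all
qed

lemma D1_meas: "{x\<in>space (PiM {1..n} (\<lambda>_. borel)). D1 n \<alpha> k x} \<in> sets (PiM {1..n} (\<lambda>_. borel))"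
proof (cases "0 < k \<and> k < n")
  case True
  have "{x\<in>space (PiM {1..n} (\<lambda>_. borel)). D1 n \<alpha> k x} =
    {x\<in>space (PiM {1..n} (\<lambda>_. borel)). \<forall>j\<in>{k..n-1}. real (card {l\<in>{2..n}. x l \<le> crit \<alpha> n (j+1)}) < real j}"
  proof (rule Collect_cong, rule conj_cong[OF refl])
    fix x show "D1 n \<alpha> k x = (\<forall>j\<in>{k..n-1}. real (card {l\<in>{2..n}. x l \<le> crit \<alpha> n (j+1)}) < real j)"
      using D1_iff[of k n \<alpha> x] True by (simp only: of_nat_less_iff)
  qed
  also have "\<dots> \<in> sets (PiM {1..n} (\<lambda>_. borel))"
    unfolding Measurable.pred_def[symmetric]
  proof (intro pred_intros_finite)
    have m: "(\<lambda>x. real (card {l\<in>{2..n}. x l \<le> crit \<alpha> n (j+1)})) \<in> borel_measurable (PiM {1..n} (\<lambda>_. borel))" for j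
      by (rule cnt_meas) auto
    show "Measurable.pred (PiM {1..n} (\<lambda>_. borel)) (\<lambda>x. real (card {l\<in>{2..n}. x l \<le> crit \<alpha> n (j+1)}) < real j)" for j
      using borel_measurable_pred_less[OF m[of j] borel_measurable_const[of "real j"]] .
  qed auto
  finally show ?thesis .
next
  case False
  thus ?thesis by (cases "k = 0") (auto simp: D1_def)
qed


locale setting = prob_space M for M :: "'a measure" +
  fixes \<xi> :: "nat \<Rightarrow> 'a \<Rightarrow> real" and n0 n :: nat
  assumes meas: "\<And>i. i \<in> {1..n} \<Longrightarrow> \<xi> i \<in> borel_measurable M"
    and indep: "indep_vars (\<lambda>_. borel) \<xi> {1..n0}"
    and ident: "\<And>i. i \<in> {1..n0} \<Longrightarrow> distr M borel (\<xi> i) = distr M borel (\<xi> 1)"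
    and blocks: "indep_var
        (Pi\<^sub>M {1..n0} (\<lambda>_. borel)) (\<lambda>\<omega>. restrict (\<lambda>i. \<xi> i \<omega>) {1..n0})
        (Pi\<^sub>M {n0<..n} (\<lambda>_. borel)) (\<lambda>\<omega>. restrict (\<lambda>i. \<xi> i \<omega>) {n0<..n})"
    and n0: "1 \<le> n0" "n0 \<le> n"
begin

lemma rect_law:
  assumes A: "\<And>i. i \<in> {1..n} \<Longrightarrow> A i \<in> sets borel"
  shows "prob {\<omega>\<in>space M. \<forall>i\<in>{1..n}. \<xi> i \<omega> \<in> A i}
    = (\<Prod>i\<in>{1..n0}. prob {\<omega>\<in>space M. \<xi> 1 \<omega> \<in> A i}) * prob {\<omega>\<in>space M. \<forall>i\<in>{n0<..n}. \<xi> i \<omega> \<in> A i}"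
proof -
  let ?X1 = "\<lambda>\<omega>. restrict (\<lambda>i. \<xi> i \<omega>) {1..n0}"
  let ?X2 = "\<lambda>\<omega>. restrict (\<lambda>i. \<xi> i \<omega>) {n0<..n}"
  have U: "{1..n} = {1..n0} \<union> {n0<..n}" using n0 by auto
  have e1: "{\<omega>\<in>space M. \<forall>i\<in>{1..n}. \<xi> i \<omega> \<in> A i}
      = (\<lambda>\<omega>. (?X1 \<omega>, ?X2 \<omega>)) -` (Pi\<^sub>E {1..n0} A \<times> Pi\<^sub>E {n0<..n} A) \<inter> space M"
    unfolding U by (auto simp: restrict_PiE_iff Pi_iff)
  have s1: "Pi\<^sub>E {1..n0} A \<in> sets (Pi\<^sub>M {1..n0} (\<lambda>_. borel))"
    using A n0 by (intro sets_PiM_I_finite) auto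
  have s2: "Pi\<^sub>E {n0<..n} A \<in> sets (Pi\<^sub>M {n0<..n} (\<lambda>_. borel))"
    using A n0 by (intro sets_PiM_I_finite) auto
  have "prob {\<omega>\<in>space M. \<forall>i\<in>{1..n}. \<xi> i \<omega> \<in> A i}
     = prob (?X1 -` Pi\<^sub>E {1..n0} A \<inter> space M) * prob (?X2 -` Pi\<^sub>E {n0<..n} A \<inter> space M)"
    unfolding e1 by (rule indep_varD[OF blocks s1 s2])
  also have "?X1 -` Pi\<^sub>E {1..n0} A \<inter> space M = (\<Inter>i\<in>{1..n0}. \<xi> i -` A i \<inter> space M)"
    using n0 by (auto simp: restrict_PiE_iff Pi_iff)
  also have "prob (\<Inter>i\<in>{1..n0}. \<xi> i -` A i \<inter> space M) = (\<Prod>i\<in>{1..n0}. prob (\<xi> i -` A i \<inter> space M))"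
    using n0 A by (intro indep_varsD[OF indep]) auto
  also have "\<dots> = (\<Prod>i\<in>{1..n0}. prob {\<omega>\<in>space M. \<xi> 1 \<omega> \<in> A i})"
  proof (rule prod.cong[OF refl])
    fix i assume i: "i \<in> {1..n0}"
    have i': "i \<in> {1..n}" "1 \<in> {1..n}" using i n0 by auto
    have "prob (\<xi> i -` A i \<inter> space M) = measure (distr M borel (\<xi> i)) (A i)"
      using meas[OF i'(1)] A[OF i'(1)] by (simp add: measure_distr)
    also have "\<dots> = measure (distr M borel (\<xi> 1)) (A i)" using ident[OF i] by simp
    also have "\<dots> = prob (\<xi> 1 -` A i \<inter> space M)"
      using meas[OF i'(2)] A[OF i'(1)] by (simp add: measure_distr)
    also have "\<xi> 1 -` A i \<inter> space M = {\<omega>\<in>space M. \<xi> 1 \<omega> \<in> A i}" by auto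
    finally show "prob (\<xi> i -` A i \<inter> space M) = prob {\<omega>\<in>space M. \<xi> 1 \<omega> \<in> A i}" .
  qed
  also have "?X2 -` Pi\<^sub>E {n0<..n} A \<inter> space M = {\<omega>\<in>space M. \<forall>i\<in>{n0<..n}. \<xi> i \<omega> \<in> A i}"
    by (auto simp: restrict_PiE_iff Pi_iff)
  finally show ?thesis .
qed

end


context setting
begin

abbreviation "F \<equiv> Pi\<^sub>M {1..n} (\<lambda>_::nat. borel :: real measure)"
abbreviation "F' \<equiv> Pi\<^sub>M {2..n} (\<lambda>_::nat. borel :: real measure)"
definition "X \<omega> = restrict (\<lambda>i. \<xi> i \<omega>) {1..n}"
definition "X' \<omega> = restrict (\<lambda>i. \<xi> i \<omega>) {2..n}"
definition "L = distr M F X"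
definition "L' = distr M F' X'"
definition "\<mu> = distr M borel (\<xi> 1)"
definition "ins p = restrict (\<lambda>j. if j = 1 then fst p else snd p j) {1..n}"
definition "\<rho> i0 x = restrict (\<lambda>j. x (sw i0 j)) {1..n}"

lemma X_meas: "X \<in> measurable M F"
  unfolding X_def by (intro measurable_restrict meas)

lemma X'_meas: "X' \<in> measurable M F'"
  unfolding X'_def by (intro measurable_restrict meas) auto

lemma \<xi>1_meas: "\<xi> 1 \<in> borel_measurable M" using meas n0 by auto

lemma prob_L: "prob_space L" unfolding L_def by (intro prob_space_distr X_meas)
lemma prob_L': "prob_space L'" unfolding L'_def by (intro prob_space_distr X'_meas)
lemma prob_\<mu>: "prob_space \<mu>" unfolding \<mu>_def by (intro prob_space_distr \<xi>1_meas)

lemma sets_L[simp]: "sets L = sets F" by (simp add: L_def)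
lemma space_L[simp]: "space L = space F" by (simp add: L_def)

lemma L_rect:
  assumes A: "\<And>i. i \<in> {1..n} \<Longrightarrow> A i \<in> sets borel"
  shows "measure L (Pi\<^sub>E {1..n} A) = prob {\<omega>\<in>space M. \<forall>i\<in>{1..n}. \<xi> i \<omega> \<in> A i}"
proof -
  have s: "Pi\<^sub>E {1..n} A \<in> sets F" using A by (intro sets_PiM_I_finite) auto
  have "measure L (Pi\<^sub>E {1..n} A) = prob (X -` Pi\<^sub>E {1..n} A \<inter> space M)"
    unfolding L_def by (rule measure_distr[OF X_meas s])
  also have "X -` Pi\<^sub>E {1..n} A \<inter> space M = {\<omega>\<in>space M. \<forall>i\<in>{1..n}. \<xi> i \<omega> \<in> A i}"
    unfolding X_def by (auto simp: restrict_PiE_iff Pi_iff)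
  finally show ?thesis .
qed

lemma sw_mem: "i0 \<in> {1..n} \<Longrightarrow> j \<in> {1..n} \<Longrightarrow> sw i0 j \<in> {1..n}"
  by (auto simp: sw_def)

lemma \<rho>_meas: "i0 \<in> {1..n} \<Longrightarrow> \<rho> i0 \<in> measurable F F"
  unfolding \<rho>_def by (intro measurable_restrict measurable_component_singleton sw_mem)

lemma \<rho>_meas_L: "i0 \<in> {1..n} \<Longrightarrow> \<rho> i0 \<in> measurable L F"
  by (subst measurable_cong_sets[OF sets_L refl]) (rule \<rho>_meas)

lemma L_reindex:
  assumes i0: "i0 \<in> {1..n0}"
  shows "distr L F (\<rho> i0) = L"
proof -
  have i0': "i0 \<in> {1..n}" using i0 n0 by auto
  interpret L: prob_space L by (rule prob_L)
  show ?thesis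
  proof (rule finite_measure_eq_PiM[where I="{1..n}" and M="\<lambda>_. borel"])
    interpret D: prob_space "distr L F (\<rho> i0)"
      by (intro prob_space.prob_space_distr[OF prob_L] \<rho>_meas_L[OF i0'])
    show "finite_measure (distr L F (\<rho> i0))" by (rule D.finite_measure_axioms)
    show "finite_measure L" by (rule L.finite_measure_axioms)
    fix A :: "nat \<Rightarrow> real set" assume A: "\<And>i. i \<in> {1..n} \<Longrightarrow> A i \<in> sets borel"
    have s: "Pi\<^sub>E {1..n} A \<in> sets F" using A by (intro sets_PiM_I_finite) auto
    have A': "\<And>i. i \<in> {1..n} \<Longrightarrow> A (sw i0 i) \<in> sets borel" using A sw_mem[OF i0'] by auto
    have "measure (distr L F (\<rho> i0)) (Pi\<^sub>E {1..n} A) = measure L (\<rho> i0 -` Pi\<^sub>E {1..n} A \<inter> space L)"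
      by (rule measure_distr[OF \<rho>_meas_L[OF i0'] s])
    also have "\<rho> i0 -` Pi\<^sub>E {1..n} A \<inter> space L = Pi\<^sub>E {1..n} (\<lambda>j. A (sw i0 j))"
    proof (intro set_eqI iffI)
      fix x assume "x \<in> \<rho> i0 -` Pi\<^sub>E {1..n} A \<inter> space L"
      hence x: "\<forall>j\<in>{1..n}. x (sw i0 j) \<in> A j" "x \<in> extensional {1..n}"
        by (auto simp: \<rho>_def restrict_PiE_iff space_PiM PiE_iff)
      have "\<forall>j\<in>{1..n}. x j \<in> A (sw i0 j)"
      proof
        fix j assume "j \<in> {1..n}"
        hence "sw i0 j \<in> {1..n}" by (rule sw_mem[OF i0'])
        from x(1)[rule_format, OF this] show "x j \<in> A (sw i0 j)" by simp
      qed
      thus "x \<in> Pi\<^sub>E {1..n} (\<lambda>j. A (sw i0 j))" using x(2) by (simp add: PiE_iff)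
    next
      fix x assume x: "x \<in> Pi\<^sub>E {1..n} (\<lambda>j. A (sw i0 j))"
      have "\<forall>j\<in>{1..n}. x (sw i0 j) \<in> A j"
      proof
        fix j assume "j \<in> {1..n}"
        hence "sw i0 j \<in> {1..n}" by (rule sw_mem[OF i0'])
        moreover have "\<forall>i\<in>{1..n}. x i \<in> A (sw i0 i)" using x by (simp add: PiE_iff)
        ultimately have "x (sw i0 j) \<in> A (sw i0 (sw i0 j))" by blast
        thus "x (sw i0 j) \<in> A j" by simp
      qed
      moreover have "x \<in> space L" using x by (auto simp: space_PiM PiE_iff)
      ultimately show "x \<in> \<rho> i0 -` Pi\<^sub>E {1..n} A \<inter> space L"
        by (simp add: \<rho>_def restrict_PiE_iff)
    qed
    also have "measure L (Pi\<^sub>E {1..n} (\<lambda>j. A (sw i0 j))) = prob {\<omega>\<in>space M. \<forall>i\<in>{1..n}. \<xi> i \<omega> \<in> A (sw i0 i)}"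
      by (rule L_rect[OF A'])
    also have "\<dots> = (\<Prod>i\<in>{1..n0}. prob {\<omega>\<in>space M. \<xi> 1 \<omega> \<in> A (sw i0 i)}) * prob {\<omega>\<in>space M. \<forall>i\<in>{n0<..n}. \<xi> i \<omega> \<in> A (sw i0 i)}"
      by (rule rect_law[OF A'])
    also have "(\<Prod>i\<in>{1..n0}. prob {\<omega>\<in>space M. \<xi> 1 \<omega> \<in> A (sw i0 i)}) = (\<Prod>i\<in>{1..n0}. prob {\<omega>\<in>space M. \<xi> 1 \<omega> \<in> A i})"
    proof (rule prod.reindex_bij_witness[where i="sw i0" and j="sw i0"])
      show "\<And>a. a \<in> {1..n0} \<Longrightarrow> sw i0 (sw i0 a) = a" by simp
      show "\<And>a. a \<in> {1..n0} \<Longrightarrow> sw i0 a \<in> {1..n0}" using i0 by (auto simp: sw_def)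
      show "\<And>b. b \<in> {1..n0} \<Longrightarrow> sw i0 b \<in> {1..n0}" using i0 by (auto simp: sw_def)
    qed simp_all
    also have "{\<omega>\<in>space M. \<forall>i\<in>{n0<..n}. \<xi> i \<omega> \<in> A (sw i0 i)} = {\<omega>\<in>space M. \<forall>i\<in>{n0<..n}. \<xi> i \<omega> \<in> A i}"
    proof -
      have "\<And>i. i \<in> {n0<..n} \<Longrightarrow> sw i0 i = i" using i0 n0 by (auto simp: sw_def)
      thus ?thesis by auto
    qed
    also have "(\<Prod>i\<in>{1..n0}. prob {\<omega>\<in>space M. \<xi> 1 \<omega> \<in> A i}) * prob {\<omega>\<in>space M. \<forall>i\<in>{n0<..n}. \<xi> i \<omega> \<in> A i}
       = measure L (Pi\<^sub>E {1..n} A)"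
      using rect_law[OF A] L_rect[OF A] by simp
    finally show "measure (distr L F (\<rho> i0)) (Pi\<^sub>E {1..n} A) = measure L (Pi\<^sub>E {1..n} A)" .
  qed simp_all
qed

end


context setting
begin

lemma sets_pairL: "sets (\<mu> \<Otimes>\<^sub>M L') = sets (borel \<Otimes>\<^sub>M F')"
  by (rule sets_pair_measure_cong) (simp_all add: \<mu>_def L'_def)

lemma space_pairL: "space (\<mu> \<Otimes>\<^sub>M L') = UNIV \<times> space F'"
  by (simp add: space_pair_measure \<mu>_def L'_def)

lemma ins_meas0: "ins \<in> measurable (borel \<Otimes>\<^sub>M F') F"
  unfolding ins_def
proof (intro measurable_restrict)
  fix j assume j: "j \<in> {1..n}"
  show "(\<lambda>p::real \<times> (nat \<Rightarrow> real). if j = 1 then fst p else snd p j) \<in> borel_measurable (borel \<Otimes>\<^sub>M F')"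
  proof (cases "j = 1")
    case True thus ?thesis by simp
  next
    case False
    hence "j \<in> {2..n}" using j by auto
    hence "(\<lambda>p::real \<times> (nat \<Rightarrow> real). snd p j) \<in> borel_measurable (borel \<Otimes>\<^sub>M F')"
      by (intro measurable_compose[OF measurable_snd measurable_component_singleton])
    thus ?thesis using False by simp
  qed
qed

lemma ins_meas: "ins \<in> measurable (\<mu> \<Otimes>\<^sub>M L') F"
  by (subst measurable_cong_sets[OF sets_pairL refl]) (rule ins_meas0)

lemma ins0_meas: "(\<lambda>z. ins (0, z)) \<in> measurable F' F"
  by (rule measurable_compose[OF _ ins_meas0]) simp

lemma prob_pairL: "prob_space (\<mu> \<Otimes>\<^sub>M L')"
proof -
  interpret A: prob_space \<mu> by (rule prob_\<mu>)
  interpret B: prob_space L' by (rule prob_L')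
  interpret pair_prob_space \<mu> L' ..
  show ?thesis by (rule prob_space_axioms)
qed

lemma ins_pre:
  "ins -` Pi\<^sub>E {1..n} A \<inter> space (\<mu> \<Otimes>\<^sub>M L') = A 1 \<times> Pi\<^sub>E {2..n} A"
proof (intro set_eqI iffI)
  fix p assume p: "p \<in> ins -` Pi\<^sub>E {1..n} A \<inter> space (\<mu> \<Otimes>\<^sub>M L')"
  obtain u z where pz: "p = (u, z)" by force
  have z: "z \<in> extensional {2..n}" using p pz by (simp add: space_pairL space_PiM PiE_iff)
  have "ins (u, z) \<in> Pi\<^sub>E {1..n} A" using p pz by simp
  hence h: "\<forall>j\<in>{1..n}. (if j = 1 then u else z j) \<in> A j"
    by (simp add: ins_def restrict_PiE_iff Pi_iff cong: if_cong)
  have "1 \<in> {1..n}" using n0 by simp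
  hence "u \<in> A 1" using h by force
  moreover have "\<forall>j\<in>{2..n}. z j \<in> A j"
  proof
    fix j assume j: "j \<in> {2..n}"
    hence "j \<in> {1..n}" "j \<noteq> 1" by auto
    thus "z j \<in> A j" using h by force
  qed
  ultimately show "p \<in> A 1 \<times> Pi\<^sub>E {2..n} A" using pz z by (simp add: PiE_iff)
next
  fix p assume p: "p \<in> A 1 \<times> Pi\<^sub>E {2..n} A"
  obtain u z where pz: "p = (u, z)" by force
  have u: "u \<in> A 1" and z: "z \<in> Pi\<^sub>E {2..n} A" using p pz by auto
  have "\<forall>j\<in>{1..n}. (if j = 1 then u else z j) \<in> A j"
  proof
    fix j assume j: "j \<in> {1..n}"
    show "(if j = 1 then u else z j) \<in> A j"
    proof (cases "j = 1")
      case True thus ?thesis using u by simp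
    next
      case False hence "j \<in> {2..n}" using j by auto
      thus ?thesis using z False by (auto simp: PiE_iff)
    qed
  qed
  hence "ins p \<in> Pi\<^sub>E {1..n} A" using pz by (simp add: ins_def restrict_PiE_iff Pi_iff cong: if_cong)
  moreover have "p \<in> space (\<mu> \<Otimes>\<^sub>M L')"
    using z pz by (auto simp: space_pairL space_PiM PiE_iff)
  ultimately show "p \<in> ins -` Pi\<^sub>E {1..n} A \<inter> space (\<mu> \<Otimes>\<^sub>M L')" by simp
qed

end


context setting
begin

lemma L'_rect:
  assumes A: "\<And>i. i \<in> {1..n} \<Longrightarrow> A i \<in> sets borel"
  shows "measure L' (Pi\<^sub>E {2..n} A) = prob {\<omega>\<in>space M. \<forall>i\<in>{2..n}. \<xi> i \<omega> \<in> A i}"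
proof -
  have s: "Pi\<^sub>E {2..n} A \<in> sets F'" using A by (intro sets_PiM_I_finite) auto
  have "measure L' (Pi\<^sub>E {2..n} A) = prob (X' -` Pi\<^sub>E {2..n} A \<inter> space M)"
    unfolding L'_def by (rule measure_distr[OF X'_meas s])
  also have "X' -` Pi\<^sub>E {2..n} A \<inter> space M = {\<omega>\<in>space M. \<forall>i\<in>{2..n}. \<xi> i \<omega> \<in> A i}"
    unfolding X'_def by (auto simp: restrict_PiE_iff Pi_iff)
  finally show ?thesis .
qed

lemma prod_split1: "(\<Prod>i\<in>{1..n0}. f i) = f 1 * (\<Prod>i\<in>{2..n0}. f i)"
  using n0 prod.atLeast_Suc_atMost[of 1 n0 f] by (simp add: numeral_2_eq_2)

lemma L_split: "L = distr (\<mu> \<Otimes>\<^sub>M L') F ins"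
proof -
  interpret L: prob_space L by (rule prob_L)
  interpret P: prob_space "\<mu> \<Otimes>\<^sub>M L'" by (rule prob_pairL)
  interpret D: prob_space "distr (\<mu> \<Otimes>\<^sub>M L') F ins" by (rule P.prob_space_distr[OF ins_meas])
  show ?thesis
  proof (rule finite_measure_eq_PiM[where I="{1..n}" and M="\<lambda>_. borel"])
    show "finite_measure (distr (\<mu> \<Otimes>\<^sub>M L') F ins)" by (rule D.finite_measure_axioms)
    show "finite_measure L" by (rule L.finite_measure_axioms)
    fix A :: "nat \<Rightarrow> real set" assume A: "\<And>i. i \<in> {1..n} \<Longrightarrow> A i \<in> sets borel"
    have s: "Pi\<^sub>E {1..n} A \<in> sets F" using A by (intro sets_PiM_I_finite) auto
    have A1: "A 1 \<in> sets borel" using A n0 by auto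
    have s2: "Pi\<^sub>E {2..n} A \<in> sets L'" unfolding L'_def sets_distr using A by (intro sets_PiM_I_finite) auto
    define A' where "A' = A(1 := UNIV)"
    have A': "\<And>i. i \<in> {1..n} \<Longrightarrow> A' i \<in> sets borel" using A by (simp add: A'_def)
    let ?Q = "prob {\<omega>\<in>space M. \<forall>i\<in>{n0<..n}. \<xi> i \<omega> \<in> A i}"
    let ?P = "(\<Prod>i\<in>{2..n0}. prob {\<omega>\<in>space M. \<xi> 1 \<omega> \<in> A i})"
    have "measure (distr (\<mu> \<Otimes>\<^sub>M L') F ins) (Pi\<^sub>E {1..n} A) =
        measure (\<mu> \<Otimes>\<^sub>M L') (ins -` Pi\<^sub>E {1..n} A \<inter> space (\<mu> \<Otimes>\<^sub>M L'))"
      by (rule measure_distr[OF ins_meas s])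
    also have "\<dots> = measure (\<mu> \<Otimes>\<^sub>M L') (A 1 \<times> Pi\<^sub>E {2..n} A)" by (simp only: ins_pre)
    also have "\<dots> = measure \<mu> (A 1) * measure L' (Pi\<^sub>E {2..n} A)"
    proof (rule prob_times[OF prob_\<mu> prob_L' _ s2])
      show "A 1 \<in> sets \<mu>" unfolding \<mu>_def sets_distr by (rule A1)
    qed
    also have "measure \<mu> (A 1) = prob {\<omega>\<in>space M. \<xi> 1 \<omega> \<in> A 1}"
    proof -
      have "measure \<mu> (A 1) = prob (\<xi> 1 -` A 1 \<inter> space M)"
        unfolding \<mu>_def by (rule measure_distr[OF \<xi>1_meas A1])
      also have "\<xi> 1 -` A 1 \<inter> space M = {\<omega>\<in>space M. \<xi> 1 \<omega> \<in> A 1}" by auto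
      finally show ?thesis .
    qed
    also have "measure L' (Pi\<^sub>E {2..n} A) = prob {\<omega>\<in>space M. \<forall>i\<in>{2..n}. \<xi> i \<omega> \<in> A i}"
      by (rule L'_rect[OF A])
    also have "{\<omega>\<in>space M. \<forall>i\<in>{2..n}. \<xi> i \<omega> \<in> A i} = {\<omega>\<in>space M. \<forall>i\<in>{1..n}. \<xi> i \<omega> \<in> A' i}"
    proof -
      have "\<And>\<omega>. (\<forall>i\<in>{1..n}. \<xi> i \<omega> \<in> A' i) \<longleftrightarrow> (\<forall>i\<in>{2..n}. \<xi> i \<omega> \<in> A i)"
      proof
        fix \<omega> assume h: "\<forall>i\<in>{1..n}. \<xi> i \<omega> \<in> A' i"
        show "\<forall>i\<in>{2..n}. \<xi> i \<omega> \<in> A i"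
        proof
          fix i assume "i \<in> {2..n}" hence "i \<in> {1..n}" "i \<noteq> 1" by auto
          thus "\<xi> i \<omega> \<in> A i" using h by (force simp: A'_def)
        qed
      next
        fix \<omega> assume h: "\<forall>i\<in>{2..n}. \<xi> i \<omega> \<in> A i"
        show "\<forall>i\<in>{1..n}. \<xi> i \<omega> \<in> A' i"
        proof
          fix i assume i: "i \<in> {1..n}"
          show "\<xi> i \<omega> \<in> A' i"
          proof (cases "i = 1")
            case True thus ?thesis by (simp add: A'_def)
          next
            case False hence "i \<in> {2..n}" using i by auto
            thus ?thesis using h False by (simp add: A'_def)
          qed
        qed
      qed
      thus ?thesis by simp
    qed
    also have "prob {\<omega>\<in>space M. \<forall>i\<in>{1..n}. \<xi> i \<omega> \<in> A' i}
       = (\<Prod>i\<in>{1..n0}. prob {\<omega>\<in>space M. \<xi> 1 \<omega> \<in> A' i}) * prob {\<omega>\<in>space M. \<forall>i\<in>{n0<..n}. \<xi> i \<omega> \<in> A' i}"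
      by (rule rect_law[OF A'])
    also have "(\<Prod>i\<in>{1..n0}. prob {\<omega>\<in>space M. \<xi> 1 \<omega> \<in> A' i}) = ?P"
    proof -
      have "(\<Prod>i\<in>{1..n0}. prob {\<omega>\<in>space M. \<xi> 1 \<omega> \<in> A' i}) =
          prob {\<omega>\<in>space M. \<xi> 1 \<omega> \<in> A' 1} * (\<Prod>i\<in>{2..n0}. prob {\<omega>\<in>space M. \<xi> 1 \<omega> \<in> A' i})"
        by (rule prod_split1)
      also have "prob {\<omega>\<in>space M. \<xi> 1 \<omega> \<in> A' 1} = 1" by (simp add: A'_def prob_space)
      also have "(\<Prod>i\<in>{2..n0}. prob {\<omega>\<in>space M. \<xi> 1 \<omega> \<in> A' i}) = ?P"
        by (intro prod.cong refl) (simp add: A'_def)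
      finally show ?thesis by simp
    qed
    also have "{\<omega>\<in>space M. \<forall>i\<in>{n0<..n}. \<xi> i \<omega> \<in> A' i} = {\<omega>\<in>space M. \<forall>i\<in>{n0<..n}. \<xi> i \<omega> \<in> A i}"
      using n0 by (auto simp: A'_def)
    moreover have "measure L (Pi\<^sub>E {1..n} A) = prob {\<omega>\<in>space M. \<xi> 1 \<omega> \<in> A 1} * ?P * ?Q"
      using L_rect[OF A] rect_law[OF A] prod_split1[of "\<lambda>i. prob {\<omega>\<in>space M. \<xi> 1 \<omega> \<in> A i}"] by simp
    ultimately show "measure L (Pi\<^sub>E {1..n} A) = measure (distr (\<mu> \<Otimes>\<^sub>M L') F ins) (Pi\<^sub>E {1..n} A)"
      by (simp add: mult.assoc)
  qed simp_all
qed

end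


context setting
begin

lemma X_space: "\<omega> \<in> space M \<Longrightarrow> X \<omega> \<in> space F"
  using measurable_space[OF X_meas] by blast

lemma PL:
  assumes i0: "i0 \<in> {1..n0}"
    and Es: "{x\<in>space F. E x} \<in> sets F"
    and Edep: "\<And>x y. \<forall>j\<in>{2..n}. x j = y j \<Longrightarrow> E x = E y"
  shows "{\<omega>\<in>space M. \<xi> i0 \<omega> \<le> t \<and> E (\<lambda>j. \<xi> (sw i0 j) \<omega>)} \<in> events"
    and "prob {\<omega>\<in>space M. \<xi> i0 \<omega> \<le> t \<and> E (\<lambda>j. \<xi> (sw i0 j) \<omega>)}
       = prob {\<omega>\<in>space M. \<xi> 1 \<omega> \<le> t} * prob {\<omega>\<in>space M. E (\<lambda>j. \<xi> j \<omega>)}"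
proof -
  have i0': "i0 \<in> {1..n}" using i0 n0 by auto
  have one: "1 \<in> {1..n}" using n0 by auto
  interpret L: prob_space L by (rule prob_L)
  interpret P: prob_space "\<mu> \<Otimes>\<^sub>M L'" by (rule prob_pairL)
  define S where "S = {y\<in>space F. y 1 \<le> t \<and> E y}"
  have S1: "{y\<in>space F. y 1 \<le> t} \<in> sets F"
  proof -
    have "{y\<in>space F. y 1 \<le> t} = (\<lambda>y. y 1) -` {..t} \<inter> space F"
      unfolding vimage_def atMost_iff by blast
    also have "\<dots> \<in> sets F" by (rule measurable_sets[OF measurable_component_singleton[OF one]]) simp
    finally show ?thesis .
  qed
  have S: "S \<in> sets F"
  proof -
    have "S = {y\<in>space F. y 1 \<le> t} \<inter> {x\<in>space F. E x}" unfolding S_def by blast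
    thus ?thesis using sets.Int[OF S1 Es] by simp
  qed
  define T where "T = {x\<in>space F. x i0 \<le> t \<and> E (\<rho> i0 x)}"
  have T_eq: "T = \<rho> i0 -` S \<inter> space F"
  proof -
    have a: "\<And>x. x \<in> space F \<Longrightarrow> \<rho> i0 x \<in> space F" using measurable_space[OF \<rho>_meas[OF i0']] by blast
    have b0: "\<And>x. \<rho> i0 x 1 = x i0" using one by (simp add: \<rho>_def sw_def)
    have b: "\<And>x. \<rho> i0 x (Suc 0) = x i0" using b0 by simp
    show ?thesis
    proof (intro set_eqI iffI)
      fix x assume "x \<in> T" thus "x \<in> \<rho> i0 -` S \<inter> space F" unfolding T_def S_def using a by (simp add: b)
    next
      fix x assume "x \<in> \<rho> i0 -` S \<inter> space F" thus "x \<in> T" unfolding T_def S_def by (simp add: b)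
    qed
  qed
  have T: "T \<in> sets F" unfolding T_eq by (rule measurable_sets[OF \<rho>_meas[OF i0'] S])
  have ev_eq: "{\<omega>\<in>space M. \<xi> i0 \<omega> \<le> t \<and> E (\<lambda>j. \<xi> (sw i0 j) \<omega>)} = X -` T \<inter> space M"
  proof -
    have "E (\<rho> i0 (X \<omega>)) = E (\<lambda>j. \<xi> (sw i0 j) \<omega>)" for \<omega>
    proof (rule Edep, rule ballI)
      fix j assume "j \<in> {2..n}"
      hence "j \<in> {1..n}" "sw i0 j \<in> {1..n}" using sw_mem[OF i0'] by auto
      thus "\<rho> i0 (X \<omega>) j = \<xi> (sw i0 j) \<omega>" by (simp add: \<rho>_def X_def)
    qed
    moreover have "X \<omega> i0 = \<xi> i0 \<omega>" for \<omega> using i0' by (simp add: X_def)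
    ultimately show ?thesis unfolding T_def using X_space by auto
  qed
  show "{\<omega>\<in>space M. \<xi> i0 \<omega> \<le> t \<and> E (\<lambda>j. \<xi> (sw i0 j) \<omega>)} \<in> events"
    unfolding ev_eq by (rule measurable_sets[OF X_meas T])
  define S' where "S' = (\<lambda>z. ins (0, z)) -` {x\<in>space F. E x} \<inter> space F'"
  have S'm: "S' \<in> sets L'" unfolding S'_def L'_def sets_distr by (rule measurable_sets[OF ins0_meas Es])
  have Eins: "E (ins (u, z)) = E (ins (0, z))" for u z
    by (rule Edep) (auto simp: ins_def)
  have ins_sp: "ins p \<in> space F" for p
    by (auto simp: ins_def space_PiM)
  have ins1: "ins p 1 = fst p" for p using one by (simp add: ins_def)
  have pre1: "ins -` S \<inter> space (\<mu> \<Otimes>\<^sub>M L') = {..t} \<times> S'"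
  proof (intro set_eqI iffI)
    fix p assume p: "p \<in> ins -` S \<inter> space (\<mu> \<Otimes>\<^sub>M L')"
    obtain u z where pz: "p = (u::real, z)" by force
    have h: "ins (u,z) 1 \<le> t" "E (ins (u,z))" "z \<in> space F'"
      using p unfolding pz S_def space_pairL by auto
    have "u \<le> t" using h(1) ins1[of "(u,z)"] by simp
    moreover have "z \<in> S'" unfolding S'_def using h(2,3) Eins[of u z] ins_sp[of "(0,z)"] by blast
    ultimately show "p \<in> {..t} \<times> S'" unfolding pz by simp
  next
    fix p assume p: "p \<in> {..t} \<times> S'"
    obtain u z where pz: "p = (u::real, z)" by force
    have h: "u \<le> t" "E (ins (0,z))" "z \<in> space F'" using p unfolding pz S'_def by auto
    have "ins (u,z) \<in> S" unfolding S_def using h(1,2) Eins[of u z] ins_sp[of "(u,z)"] ins1[of "(u,z)"] by simp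
    moreover have "(u,z) \<in> space (\<mu> \<Otimes>\<^sub>M L')" unfolding space_pairL using h(3) by simp
    ultimately show "p \<in> ins -` S \<inter> space (\<mu> \<Otimes>\<^sub>M L')" unfolding pz by simp
  qed
  have pre2: "ins -` {x\<in>space F. E x} \<inter> space (\<mu> \<Otimes>\<^sub>M L') = UNIV \<times> S'"
  proof (intro set_eqI iffI)
    fix p assume p: "p \<in> ins -` {x\<in>space F. E x} \<inter> space (\<mu> \<Otimes>\<^sub>M L')"
    obtain u z where pz: "p = (u::real, z)" by force
    have h: "E (ins (u,z))" "z \<in> space F'" using p unfolding pz space_pairL by auto
    have "z \<in> S'" unfolding S'_def using h Eins[of u z] ins_sp[of "(0,z)"] by blast
    thus "p \<in> UNIV \<times> S'" unfolding pz by simp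
  next
    fix p :: "real \<times> (nat \<Rightarrow> real)" assume p: "p \<in> UNIV \<times> S'"
    obtain u z where pz: "p = (u::real, z)" by force
    have h: "E (ins (0,z))" "z \<in> space F'" using p unfolding pz S'_def by auto
    have "ins (u,z) \<in> {x\<in>space F. E x}" using h(1) Eins[of u z] ins_sp[of "(u,z)"] by simp
    moreover have "(u,z) \<in> space (\<mu> \<Otimes>\<^sub>M L')" unfolding space_pairL using h(2) by simp
    ultimately show "p \<in> ins -` {x\<in>space F. E x} \<inter> space (\<mu> \<Otimes>\<^sub>M L')" unfolding pz by simp
  qed
  have "prob {\<omega>\<in>space M. \<xi> i0 \<omega> \<le> t \<and> E (\<lambda>j. \<xi> (sw i0 j) \<omega>)} = measure L T"
    unfolding ev_eq L_def by (rule measure_distr[OF X_meas T, symmetric])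
  also have "\<dots> = measure (distr L F (\<rho> i0)) S"
    unfolding T_eq by (subst measure_distr[OF \<rho>_meas_L[OF i0'] S]) simp
  also have "\<dots> = measure L S" by (simp only: L_reindex[OF i0])
  also have "\<dots> = measure (\<mu> \<Otimes>\<^sub>M L') ({..t} \<times> S')"
    by (subst (1) L_split) (simp only: measure_distr[OF ins_meas S] pre1)
  also have "\<dots> = measure \<mu> {..t} * measure L' S'"
    by (rule prob_times[OF prob_\<mu> prob_L' _ S'm]) (simp add: \<mu>_def)
  also have "measure \<mu> {..t} = prob {\<omega>\<in>space M. \<xi> 1 \<omega> \<le> t}"
  proof -
    have "measure \<mu> {..t} = prob (\<xi> 1 -` {..t} \<inter> space M)"
      unfolding \<mu>_def by (rule measure_distr[OF \<xi>1_meas]) simp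
    also have "\<xi> 1 -` {..t} \<inter> space M = {\<omega>\<in>space M. \<xi> 1 \<omega> \<le> t}" by auto
    finally show ?thesis .
  qed
  also have "measure L' S' = prob {\<omega>\<in>space M. E (\<lambda>j. \<xi> j \<omega>)}"
  proof -
    have "measure L' S' = measure \<mu> UNIV * measure L' S'"
      using prob_space.prob_space[OF prob_\<mu>] by (simp add: \<mu>_def)
    also have "\<dots> = measure (\<mu> \<Otimes>\<^sub>M L') (UNIV \<times> S')"
      by (rule prob_times[OF prob_\<mu> prob_L' _ S'm, symmetric]) (simp add: \<mu>_def)
    also have "\<dots> = measure L {x\<in>space F. E x}"
      by (subst L_split) (simp only: measure_distr[OF ins_meas Es] pre2)
    also have "\<dots> = prob (X -` {x\<in>space F. E x} \<inter> space M)"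
      unfolding L_def by (rule measure_distr[OF X_meas Es])
    also have "X -` {x\<in>space F. E x} \<inter> space M = {\<omega>\<in>space M. E (\<lambda>j. \<xi> j \<omega>)}"
    proof -
      have "E (X \<omega>) = E (\<lambda>j. \<xi> j \<omega>)" for \<omega>
        by (rule Edep) (auto simp: X_def)
      thus ?thesis using X_space by auto
    qed
    finally show ?thesis .
  qed
  finally show "prob {\<omega>\<in>space M. \<xi> i0 \<omega> \<le> t \<and> E (\<lambda>j. \<xi> (sw i0 j) \<omega>)}
       = prob {\<omega>\<in>space M. \<xi> 1 \<omega> \<le> t} * prob {\<omega>\<in>space M. E (\<lambda>j. \<xi> j \<omega>)}" .
qed

end


lemma D1_mono:
  assumes "1 \<le> k" "D1 n \<alpha> (k-1) x"
  shows "D1 n \<alpha> k x"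
proof (cases "n \<le> k")
  case True thus ?thesis using assms(1) by (simp add: D1_def)
next
  case False
  have k0: "k - 1 \<noteq> 0" using assms(2) by (auto simp: D1_def)
  have k1: "\<not> n \<le> k - 1" using False by simp
  have h: "\<forall>j\<in>{k-1..n-1}. ord_stat (n - 1) (\<lambda>i. x (i + 1)) j > crit \<alpha> n (j + 1)"
    using assms(2) unfolding D1_def using k0 k1 by (simp only: if_not_P if_False)
  have "\<forall>j\<in>{k..n-1}. ord_stat (n - 1) (\<lambda>i. x (i + 1)) j > crit \<alpha> n (j + 1)"
  proof
    fix j assume "j \<in> {k..n-1}" hence "j \<in> {k-1..n-1}" by auto
    thus "ord_stat (n - 1) (\<lambda>i. x (i + 1)) j > crit \<alpha> n (j + 1)" using h by blast
  qed
  moreover have "k \<noteq> 0" using assms(1) by simp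
  ultimately show ?thesis unfolding D1_def using False by (simp only: if_not_P if_False)
qed

lemma telescope: "(\<Sum>k\<in>{1..(r::nat)}. f k - f (k - 1)) = f r - (f 0 :: real)"
proof (induction r)
  case 0 thus ?case by simp
next
  case (Suc r)
  have "(\<Sum>k\<in>{1..Suc r}. f k - f (k - 1)) = (\<Sum>k\<in>{1..r}. f k - f (k - 1)) + (f (Suc r) - f r)"
    by (simp add: sum.atLeast1_atMost_eq)
  thus ?case using Suc by simp
qed

context setting
begin

lemma D1_ev: "{\<omega>\<in>space M. D1 n \<alpha> k (\<lambda>j. \<xi> j \<omega>)} \<in> events"
proof -
  have "{\<omega>\<in>space M. D1 n \<alpha> k (\<lambda>j. \<xi> j \<omega>)} = X -` {x\<in>space F. D1 n \<alpha> k x} \<inter> space M"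
  proof -
    have "D1 n \<alpha> k (X \<omega>) = D1 n \<alpha> k (\<lambda>j. \<xi> j \<omega>)" for \<omega>
      by (rule D1_dep) (auto simp: X_def)
    thus ?thesis using X_space by auto
  qed
  also have "\<dots> \<in> events" by (rule measurable_sets[OF X_meas D1_meas])
  finally show ?thesis .
qed

lemma Ev_PL:
  assumes i: "i \<in> {1..n0}" and k: "1 \<le> k"
  shows "{\<omega>\<in>space M. \<xi> i \<omega> \<le> t \<and> Ev n \<alpha> k (\<lambda>j. \<xi> (sw i j) \<omega>)} \<in> events"
    and "prob {\<omega>\<in>space M. \<xi> i \<omega> \<le> t \<and> Ev n \<alpha> k (\<lambda>j. \<xi> (sw i j) \<omega>)}
       = prob {\<omega>\<in>space M. \<xi> 1 \<omega> \<le> t} *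
         (prob {\<omega>\<in>space M. D1 n \<alpha> k (\<lambda>j. \<xi> j \<omega>)} - prob {\<omega>\<in>space M. D1 n \<alpha> (k-1) (\<lambda>j. \<xi> j \<omega>)})"
proof -
  have Es: "{x\<in>space F. Ev n \<alpha> k x} \<in> sets F"
  proof -
    have "{x\<in>space F. Ev n \<alpha> k x} = {x\<in>space F. D1 n \<alpha> k x} - {x\<in>space F. D1 n \<alpha> (k-1) x}"
      unfolding Ev_def by blast
    thus ?thesis using sets.Diff[OF D1_meas D1_meas] by simp
  qed
  have Edep: "Ev n \<alpha> k x = Ev n \<alpha> k y" if "\<forall>j\<in>{2..n}. x j = y j" for x y
    unfolding Ev_def using D1_dep[OF that] by simp
  show "{\<omega>\<in>space M. \<xi> i \<omega> \<le> t \<and> Ev n \<alpha> k (\<lambda>j. \<xi> (sw i j) \<omega>)} \<in> events"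
    by (rule PL(1)[OF i Es Edep])
  have "prob {\<omega>\<in>space M. \<xi> i \<omega> \<le> t \<and> Ev n \<alpha> k (\<lambda>j. \<xi> (sw i j) \<omega>)}
     = prob {\<omega>\<in>space M. \<xi> 1 \<omega> \<le> t} * prob {\<omega>\<in>space M. Ev n \<alpha> k (\<lambda>j. \<xi> j \<omega>)}"
    by (rule PL(2)[OF i Es Edep])
  also have "{\<omega>\<in>space M. Ev n \<alpha> k (\<lambda>j. \<xi> j \<omega>)} =
      {\<omega>\<in>space M. D1 n \<alpha> k (\<lambda>j. \<xi> j \<omega>)} - {\<omega>\<in>space M. D1 n \<alpha> (k-1) (\<lambda>j. \<xi> j \<omega>)}"
    unfolding Ev_def by blast
  also have "prob \<dots> = prob {\<omega>\<in>space M. D1 n \<alpha> k (\<lambda>j. \<xi> j \<omega>)} - prob {\<omega>\<in>space M. D1 n \<alpha> (k-1) (\<lambda>j. \<xi> j \<omega>)}"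
  proof (rule finite_measure_Diff[OF D1_ev D1_ev])
    show "{\<omega>\<in>space M. D1 n \<alpha> (k-1) (\<lambda>j. \<xi> j \<omega>)} \<subseteq> {\<omega>\<in>space M. D1 n \<alpha> k (\<lambda>j. \<xi> j \<omega>)}"
      using D1_mono[OF k] by blast
  qed
  finally show "prob {\<omega>\<in>space M. \<xi> i \<omega> \<le> t \<and> Ev n \<alpha> k (\<lambda>j. \<xi> (sw i j) \<omega>)}
       = prob {\<omega>\<in>space M. \<xi> 1 \<omega> \<le> t} *
         (prob {\<omega>\<in>space M. D1 n \<alpha> k (\<lambda>j. \<xi> j \<omega>)} - prob {\<omega>\<in>space M. D1 n \<alpha> (k-1) (\<lambda>j. \<xi> j \<omega>)})" .
qed

end


context setting
begin

lemma main:
  assumes a: "0 < \<alpha>" and ts: "0 < tstar" "tstar \<le> \<alpha>"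
    and cdf: "\<And>t. t \<in> {0..tstar} \<Longrightarrow> prob {\<omega> \<in> space M. \<xi> 1 \<omega> \<le> t} = \<gamma> * t"
  shows "integral\<^sup>L M (\<lambda>\<omega>. real (BH_V n0 n \<alpha> (\<lambda>i. \<xi> i \<omega>))
              / real (max (BH_R n \<alpha> (\<lambda>i. \<xi> i \<omega>)) 1)
              * indicator {\<omega> \<in> space M. A_event n \<alpha> tstar (\<lambda>i. \<xi> i \<omega>)} \<omega>)
         = real n0 / real n * \<gamma> * \<alpha> *
           prob {\<omega> \<in> space M.
             D1 n \<alpha> (Max {i::nat. real i * \<alpha> / real n \<le> tstar}) (\<lambda>i. \<xi> i \<omega>)}"
proof -
  have n: "0 < n" using n0 by simp
  define Rs where "Rs = {i::nat. real i * \<alpha> / real n \<le> tstar}"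
  define r where "r = Max Rs"
  have Rs_sub: "Rs \<subseteq> {..n}"
  proof
    fix i assume "i \<in> Rs"
    hence h: "real i * \<alpha> / real n \<le> tstar" by (simp add: Rs_def)
    show "i \<in> {..n}"
    proof (rule ccontr)
      assume "i \<notin> {..n}"
      hence "real n < real i" by simp
      hence "real n * \<alpha> < real i * \<alpha>" using a by simp
      hence "\<alpha> < real i * \<alpha> / real n" using n by (simp add: field_simps)
      thus False using h ts by linarith
    qed
  qed
  have fin: "finite Rs" using Rs_sub finite_subset by blast
  have "0 \<in> Rs" using ts by (simp add: Rs_def)
  hence ne: "Rs \<noteq> {}" by blast
  have rR: "r \<in> Rs" unfolding r_def by (rule Max_in[OF fin ne])
  have rn: "r \<le> n" using rR Rs_sub by auto
  have cr: "crit \<alpha> n r \<le> tstar" using rR by (simp add: Rs_def crit_def)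
  have rk: "tstar < crit \<alpha> n k" if "r < k" for k
  proof (rule ccontr)
    assume "\<not> tstar < crit \<alpha> n k"
    hence "k \<in> Rs" by (simp add: Rs_def crit_def)
    hence "k \<le> r" unfolding r_def by (rule Max_ge[OF fin])
    thus False using that by simp
  qed
  define EV where "EV i k = {\<omega>\<in>space M. \<xi> i \<omega> \<le> crit \<alpha> n k \<and> Ev n \<alpha> k (\<lambda>j. \<xi> (sw i j) \<omega>)}" for i k
  define P where "P k = prob {\<omega>\<in>space M. D1 n \<alpha> k (\<lambda>j. \<xi> j \<omega>)}" for k
  have EVs: "EV i k \<in> events" if "i \<in> {1..n0}" "k \<in> {1..r}" for i k
    unfolding EV_def using Ev_PL(1)[of i k] that by simp
  have EVp: "prob (EV i k) = \<gamma> * crit \<alpha> n k * (P k - P (k - 1))" if i: "i \<in> {1..n0}" and k: "k \<in> {1..r}" for i k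
  proof -
    have c: "crit \<alpha> n k \<in> {0..tstar}" unfolding atLeastAtMost_iff
    proof
      show "0 \<le> crit \<alpha> n k" using a by (simp add: crit_def)
      have "crit \<alpha> n k \<le> crit \<alpha> n r" using k by (intro crit_mono a) simp
      thus "crit \<alpha> n k \<le> tstar" using cr by simp
    qed
    have "prob (EV i k) = prob {\<omega>\<in>space M. \<xi> 1 \<omega> \<le> crit \<alpha> n k} * (P k - P (k - 1))"
      unfolding EV_def P_def using Ev_PL(2)[of i k] i k by simp
    thus ?thesis using cdf[OF c] by simp
  qed
  have integrand: "real (BH_V n0 n \<alpha> (\<lambda>i. \<xi> i \<omega>)) / real (max (BH_R n \<alpha> (\<lambda>i. \<xi> i \<omega>)) 1)
              * indicator {\<omega> \<in> space M. A_event n \<alpha> tstar (\<lambda>i. \<xi> i \<omega>)} \<omega>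
     = (\<Sum>i\<in>{1..n0}. \<Sum>k\<in>{1..r}. 1 / real k * indicator (EV i k) \<omega>)" if w: "\<omega> \<in> space M" for \<omega>
  proof -
    have "indicator {\<omega> \<in> space M. A_event n \<alpha> tstar (\<lambda>i. \<xi> i \<omega>)} \<omega> =
        (if A_event n \<alpha> tstar (\<lambda>i. \<xi> i \<omega>) then 1 else (0::real))"
      using w by (simp add: indicator_def)
    moreover have "indicator (EV i k) \<omega> =
        (if \<xi> i \<omega> \<le> crit \<alpha> n k \<and> Ev n \<alpha> k (\<lambda>j. \<xi> (sw i j) \<omega>) then 1 else (0::real))" for i k
      using w by (simp add: indicator_def EV_def)
    ultimately show ?thesis
      using pointwise[OF a n n0(2) rn cr rk, of "\<lambda>i. \<xi> i \<omega>"] by simp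
  qed
  have integ: "integrable M (\<lambda>\<omega>. 1 / real k * indicator (EV i k) \<omega> :: real)"
    if "i \<in> {1..n0}" "k \<in> {1..r}" for i k
    using EVs[OF that] by (intro integrable_mult_right integrable_real_indicator) (auto simp: less_top[symmetric])
  have "integral\<^sup>L M (\<lambda>\<omega>. real (BH_V n0 n \<alpha> (\<lambda>i. \<xi> i \<omega>))
              / real (max (BH_R n \<alpha> (\<lambda>i. \<xi> i \<omega>)) 1)
              * indicator {\<omega> \<in> space M. A_event n \<alpha> tstar (\<lambda>i. \<xi> i \<omega>)} \<omega>)
     = integral\<^sup>L M (\<lambda>\<omega>. \<Sum>i\<in>{1..n0}. \<Sum>k\<in>{1..r}. 1 / real k * indicator (EV i k) \<omega>)"
    by (rule Bochner_Integration.integral_cong[OF refl integrand])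
  also have "\<dots> = (\<Sum>i\<in>{1..n0}. integral\<^sup>L M (\<lambda>\<omega>. \<Sum>k\<in>{1..r}. 1 / real k * indicator (EV i k) \<omega>))"
  proof (rule Bochner_Integration.integral_sum)
    fix i assume i: "i \<in> {1..n0}"
    show "integrable M (\<lambda>\<omega>. \<Sum>k\<in>{1..r}. 1 / real k * indicator (EV i k) \<omega>)"
      by (rule Bochner_Integration.integrable_sum) (rule integ[OF i])
  qed
  also have "\<dots> = (\<Sum>i\<in>{1..n0}. \<Sum>k\<in>{1..r}. 1 / real k * prob (EV i k))"
  proof (rule sum.cong[OF refl])
    fix i assume i: "i \<in> {1..n0}"
    have "integral\<^sup>L M (\<lambda>\<omega>. \<Sum>k\<in>{1..r}. 1 / real k * indicator (EV i k) \<omega>)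
       = (\<Sum>k\<in>{1..r}. integral\<^sup>L M (\<lambda>\<omega>. 1 / real k * indicator (EV i k) \<omega>))"
      by (rule Bochner_Integration.integral_sum) (rule integ[OF i])
    also have "\<dots> = (\<Sum>k\<in>{1..r}. 1 / real k * prob (EV i k))"
    proof (rule sum.cong[OF refl])
      fix k assume k: "k \<in> {1..r}"
      have "EV i k \<inter> space M = EV i k" using EVs[OF i k] sets.sets_into_space by blast
      thus "integral\<^sup>L M (\<lambda>\<omega>. 1 / real k * indicator (EV i k) \<omega>) = 1 / real k * prob (EV i k)"
        by simp
    qed
    finally show "integral\<^sup>L M (\<lambda>\<omega>. \<Sum>k\<in>{1..r}. 1 / real k * indicator (EV i k) \<omega>)
       = (\<Sum>k\<in>{1..r}. 1 / real k * prob (EV i k))" .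
  qed
  also have "\<dots> = (\<Sum>i\<in>{1..n0}. \<Sum>k\<in>{1..r}. \<gamma> * \<alpha> / real n * (P k - P (k - 1)))"
  proof (intro sum.cong refl)
    fix i k assume i: "i \<in> {1..n0}" and k: "k \<in> {1..r}"
    have kk: "real k \<noteq> 0" using k by simp
    have "prob (EV i k) = real k * (\<gamma> * \<alpha> / real n * (P k - P (k - 1)))"
      using EVp[OF i k] n by (simp add: crit_def field_simps)
    thus "1 / real k * prob (EV i k) = \<gamma> * \<alpha> / real n * (P k - P (k - 1))"
      using kk by simp
  qed
  also have "\<dots> = (\<Sum>i\<in>{1..n0}. \<gamma> * \<alpha> / real n * (P r - P 0))"
  proof (rule sum.cong[OF refl])
    fix i
    have "(\<Sum>k\<in>{1..r}. \<gamma> * \<alpha> / real n * (P k - P (k - 1))) = \<gamma> * \<alpha> / real n * (\<Sum>k\<in>{1..r}. P k - P (k - 1))"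
      by (rule sum_distrib_left[symmetric])
    also have "(\<Sum>k\<in>{1..r}. P k - P (k - 1)) = P r - P 0" by (rule telescope)
    finally show "(\<Sum>k\<in>{1..r}. \<gamma> * \<alpha> / real n * (P k - P (k - 1))) = \<gamma> * \<alpha> / real n * (P r - P 0)" .
  qed
  also have "P 0 = 0" by (simp add: P_def D1_def)
  also have "(\<Sum>i\<in>{1..n0}. \<gamma> * \<alpha> / real n * (P r - 0)) = real n0 / real n * \<gamma> * \<alpha> * P r"
    by simp
  finally show ?thesis unfolding P_def r_def Rs_def .
qed

end


theorem lemma2p3:
  fixes M :: "'a measure" and \<xi> :: "nat \<Rightarrow> 'a \<Rightarrow> real"
    and \<alpha> \<gamma> tstar :: real and n0 n :: nat
  assumes "prob_space M"
    and "0 < \<alpha>" "\<alpha> < 1"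
    and "0 \<le> \<gamma>" "\<gamma> \<le> 1 / \<alpha>"
    and "1 \<le> n0" "n0 \<le> n"
    and "0 < tstar" "tstar \<le> \<alpha>"
    and meas: "\<And>i. i \<in> {1..n} \<Longrightarrow> \<xi> i \<in> borel_measurable M"
    and range01: "\<And>i \<omega>. i \<in> {1..n} \<Longrightarrow> \<omega> \<in> space M \<Longrightarrow> \<xi> i \<omega> \<in> {0..1}"
    and indep: "prob_space.indep_vars M (\<lambda>_. borel) \<xi> {1..n0}"
    and ident: "\<And>i. i \<in> {1..n0} \<Longrightarrow> distr M borel (\<xi> i) = distr M borel (\<xi> 1)"
    and cdf: "\<And>t. t \<in> {0..tstar} \<Longrightarrow> measure M {\<omega> \<in> space M. \<xi> 1 \<omega> \<le> t} = \<gamma> * t"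
    and indep_blocks: "prob_space.indep_var M
        (Pi\<^sub>M {1..n0} (\<lambda>_. borel)) (\<lambda>\<omega>. restrict (\<lambda>i. \<xi> i \<omega>) {1..n0})
        (Pi\<^sub>M {n0<..n} (\<lambda>_. borel)) (\<lambda>\<omega>. restrict (\<lambda>i. \<xi> i \<omega>) {n0<..n})"
  shows "integral\<^sup>L M (\<lambda>\<omega>. real (BH_V n0 n \<alpha> (\<lambda>i. \<xi> i \<omega>))
              / real (max (BH_R n \<alpha> (\<lambda>i. \<xi> i \<omega>)) 1)
              * indicator {\<omega> \<in> space M. A_event n \<alpha> tstar (\<lambda>i. \<xi> i \<omega>)} \<omega>)
         = real n0 / real n * \<gamma> * \<alpha> *
           measure M {\<omega> \<in> space M.
             D1 n \<alpha> (Max {i::nat. real i * \<alpha> / real n \<le> tstar}) (\<lambda>i. \<xi> i \<omega>)}"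
proof -
  interpret S: setting M \<xi> n0 n
  proof (rule setting.intro[OF assms(1)], rule setting_axioms.intro)
    show "\<And>i. i \<in> {1..n} \<Longrightarrow> \<xi> i \<in> borel_measurable M" by (rule meas)
    show "prob_space.indep_vars M (\<lambda>_. borel) \<xi> {1..n0}" by (rule indep)
    show "\<And>i. i \<in> {1..n0} \<Longrightarrow> distr M borel (\<xi> i) = distr M borel (\<xi> 1)" by (rule ident)
    show "prob_space.indep_var M
        (Pi\<^sub>M {1..n0} (\<lambda>_. borel)) (\<lambda>\<omega>. restrict (\<lambda>i. \<xi> i \<omega>) {1..n0})
        (Pi\<^sub>M {n0<..n} (\<lambda>_. borel)) (\<lambda>\<omega>. restrict (\<lambda>i. \<xi> i \<omega>) {n0<..n})" by (rule indep_blocks)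
    show "1 \<le> n0" "n0 \<le> n" by fact+
  qed
  show ?thesis by (rule S.main[OF assms(2) assms(8) assms(9) cdf])
qed


end
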